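(* There exists a constant $c>0$ such that the following holds. Consider the $K$-class stochastic block model on $n$ nodes (labels $Z_i$; given $Z$, $A_{ij}=A_{ji}$, $i<j$, independent Bernoulli$(P_{Z_iZ_j})$, $A_{ii}=0$, $P$ symmetric with entries in $[0,1]$). Let $t_{ab}:[0,1]\to\mathbb R$, $a,b\in\{1,\dots,K\}$, be twice differentiable functions with $\|t_{ab}'\|_\infty\vee\|t_{ab}''\|_\infty\le1$, and define for labellings $e$ the $K\times K$ matrix $$X_{ab}(e)=t_{ab}\Big(\frac{\widetilde O_{ab}(e)}{n^2}\Big)-t_{ab}\Big(\frac{\mathbb E(\widetilde O_{ab}(e)\mid Z)}{n^2}\Big).$$ Then for every integer $0\le m\le n$ and every $x>0$, $$\Pr\Big(\max_{e:\,\#\{i:e_i\ne Z_i\}\le m}\|X(e)-X(Z)\|_\infty>x\Big)\le6\binom nmK^{m+2}e^{-\frac{cx^2n^2}{m\|P\|_\infty/n+x}}.$$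
   Context: $O_{ab}(e)=\sum_{i,j}A_{ij}1\{e_i=a,e_j=b\}$ for $a\ne b$, $O_{aa}(e)=\sum_{i<j}A_{ij}1\{e_i=e_j=a\}$; $\widetilde O_{ab}(e)=O_{ab}(e)$ for $a\ne b$ and $\widetilde O_{aa}(e)=2O_{aa}(e)$. For a matrix $M$, $\|M\|_\infty=\max_{a,b}|M_{ab}|$; for a function, $\|\cdot\|_\infty$ is the sup norm. *)

theory Defs
  imports "HOL-Probability.Probability"
begin

text \<open>Nodes are 0..<n, classes are 0..<K. An outcome of the random graph is the
 vector of upper-triangular edge indicators w (i,j), i<j<n.\<close>

definition adj :: "(nat \<times> nat \<Rightarrow> bool) \<Rightarrow> nat \<Rightarrow> nat \<Rightarrow> real" where
  "adj w i j = (if i < j then of_bool (w (i, j)) else if j < i then of_bool (w (j, i)) else 0)"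

definition sbm_pmf :: "nat \<Rightarrow> (nat \<Rightarrow> nat \<Rightarrow> real) \<Rightarrow> (nat \<Rightarrow> nat) \<Rightarrow> (nat \<times> nat \<Rightarrow> bool) pmf" where
  "sbm_pmf n P Z = Pi_pmf {(i, j). i < j \<and> j < n} False
     (\<lambda>(i, j). bernoulli_pmf (P (Z i) (Z j)))"

definition Ocount :: "nat \<Rightarrow> (nat \<Rightarrow> nat \<Rightarrow> real) \<Rightarrow> (nat \<Rightarrow> nat) \<Rightarrow> nat \<Rightarrow> nat \<Rightarrow> real" where
  "Ocount n A e a b =
     (if a \<noteq> b then (\<Sum>i<n. \<Sum>j<n. A i j * of_bool (e i = a \<and> e j = b))
      else (\<Sum>i<n. \<Sum>j<n. if i < j then A i j * of_bool (e i = a \<and> e j = a) else 0))"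

definition Otilde :: "nat \<Rightarrow> (nat \<Rightarrow> nat \<Rightarrow> real) \<Rightarrow> (nat \<Rightarrow> nat) \<Rightarrow> nat \<Rightarrow> nat \<Rightarrow> real" where
  "Otilde n A e a b = (if a = b then 2 * Ocount n A e a b else Ocount n A e a b)"

definition Xmat :: "nat \<Rightarrow> (nat \<Rightarrow> nat \<Rightarrow> real) \<Rightarrow> (nat \<Rightarrow> nat) \<Rightarrow> (nat \<Rightarrow> nat \<Rightarrow> real \<Rightarrow> real)
    \<Rightarrow> (nat \<times> nat \<Rightarrow> bool) \<Rightarrow> (nat \<Rightarrow> nat) \<Rightarrow> nat \<Rightarrow> nat \<Rightarrow> real" where
  "Xmat n P Z t w e a b =
     t a b (Otilde n (adj w) e a b / real n ^ 2)
     - t a b (measure_pmf.expectation (sbm_pmf n P Z) (\<lambda>w'. Otilde n (adj w') e a b) / real n ^ 2)"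

definition supnorm :: "nat \<Rightarrow> (nat \<Rightarrow> nat \<Rightarrow> real) \<Rightarrow> real" where
  "supnorm K M = Max {\<bar>M a b\<bar> | a b. a < K \<and> b < K}"

end

theory Submission
  imports Defs
begin


lemma exp_quad_bound:
  fixes u :: real assumes "\<bar>u\<bar> \<le> 1" shows "exp u \<le> 1 + u + u\<^sup>2"
proof (cases "u \<ge> 0")
  case True thus ?thesis using assms exp_bound by auto
next
  case False
  define v where "v = -u"
  have v: "0 < v" "v \<le> 1" using False assms by (auto simp: v_def)
  have "1 + v \<le> exp v" by (rule exp_ge_add_one_self)
  have "exp u = 1 / exp v" by (simp add: v_def exp_minus field_simps)
  also have "\<dots> \<le> 1 / (1 + v)" using \<open>1 + v \<le> exp v\<close> v by (intro divide_left_mono) auto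
  also have "\<dots> \<le> 1 - v + v\<^sup>2"
  proof -
    have "(1 - v + v\<^sup>2) * (1 + v) = 1 + v^3" by (simp add: algebra_simps power2_eq_square power3_eq_cube)
    also have "\<dots> \<ge> 1" using v by simp
    finally show ?thesis using v by (simp add: field_simps)
  qed
  finally show ?thesis by (simp add: v_def)
qed

lemma bern_mgf:
  fixes z q :: real
  assumes "\<bar>z\<bar> \<le> 1" "0 \<le> q" "q \<le> 1"
  shows "measure_pmf.expectation (bernoulli_pmf q) (\<lambda>b. exp (z * (of_bool b - q))) \<le> exp (z\<^sup>2 * q)"
proof -
  have a: "exp (z * (1 - q)) \<le> 1 + z * (1 - q) + (z * (1 - q))\<^sup>2"
  proof (rule exp_quad_bound)
    have "\<bar>z\<bar> * (1 - q) \<le> 1 * 1" using assms by (intro mult_mono) auto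
    thus "\<bar>z * (1 - q)\<bar> \<le> 1" using assms by (simp add: abs_mult)
  qed
  have b: "exp (z * (- q)) \<le> 1 + z * (-q) + (z * (-q))\<^sup>2"
  proof (rule exp_quad_bound)
    have "\<bar>z\<bar> * q \<le> 1 * 1" using assms by (intro mult_mono) auto
    thus "\<bar>z * (-q)\<bar> \<le> 1" using assms by (simp add: abs_mult)
  qed
  have "measure_pmf.expectation (bernoulli_pmf q) (\<lambda>b. exp (z * (of_bool b - q)))
      = exp (z * (1 - q)) * q + exp (z * (-q)) * (1 - q)" using assms by simp
  also have "\<dots> \<le> (1 + z * (1 - q) + (z * (1 - q))\<^sup>2) * q + (1 + z * (-q) + (z * (-q))\<^sup>2) * (1 - q)"
    using a b assms by (intro add_mono mult_right_mono) auto
  also have "\<dots> = 1 + z\<^sup>2 * q * (1 - q)" by (simp add: algebra_simps power2_eq_square)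
  also have "\<dots> \<le> 1 + z\<^sup>2 * q" using assms by (intro add_left_mono mult_left_le) auto
  also have "\<dots> \<le> exp (z\<^sup>2 * q)" by (rule exp_ge_add_one_self)
  finally show ?thesis .
qed

lemma finite_set_Pi_bern:
  assumes "finite I"
  shows "finite (set_pmf (Pi_pmf I False (\<lambda>p. bernoulli_pmf (q p))))"
  by (rule finite_subset[OF set_Pi_pmf_subset'[OF assms]]) (intro finite_PiE_dflt assms, auto)

lemma bernstein_one:
  fixes I :: "'a set" and q \<alpha> :: "'a \<Rightarrow> real"
  assumes I: "finite I" and q: "\<And>p. p \<in> I \<Longrightarrow> 0 \<le> q p \<and> q p \<le> 1"
    and \<alpha>: "\<And>p. p \<in> I \<Longrightarrow> \<bar>\<alpha> p\<bar> \<le> \<beta>" and \<beta>: "\<beta> > 0" and y: "y > 0"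
    and V: "(\<Sum>p\<in>I. (\<alpha> p)\<^sup>2 * q p) \<le> V"
  shows "measure_pmf.prob (Pi_pmf I False (\<lambda>p. bernoulli_pmf (q p)))
           {w. (\<Sum>p\<in>I. \<alpha> p * (of_bool (w p) - q p)) \<ge> y} \<le> exp (- (y\<^sup>2 / (4 * V + 2 * \<beta> * y)))"
proof -
  let ?M = "Pi_pmf I False (\<lambda>p. bernoulli_pmf (q p))"
  let ?Y = "\<lambda>w. (\<Sum>p\<in>I. \<alpha> p * (of_bool (w p) - q p))"
  have "0 \<le> (\<Sum>p\<in>I. (\<alpha> p)\<^sup>2 * q p)" by (intro sum_nonneg) (simp add: q)
  hence V0: "0 \<le> V" using V by linarith
  define d where "d = 2 * V + \<beta> * y"
  have "\<beta> * y > 0" using \<beta> y by simp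
  hence d: "d > 0" using V0 by (simp add: d_def)
  define lam where "lam = y / d"
  have l0: "lam > 0" using d y by (simp add: lam_def)
  have lb: "lam * \<beta> \<le> 1" using V0 \<beta> y d by (simp add: lam_def d_def field_simps)
  have fin: "finite (set_pmf ?M)" by (rule finite_set_Pi_bern[OF I])
  have "measure_pmf.prob ?M {w. ?Y w \<ge> y} \<le> measure_pmf.prob ?M {w. exp (lam * ?Y w) \<ge> exp (lam * y)}"
    using l0 by (intro measure_pmf.finite_measure_mono) auto
  also have "\<dots> \<le> measure_pmf.expectation ?M (\<lambda>w. exp (lam * ?Y w)) / exp (lam * y)"
  proof -
    have "measure_pmf.prob ?M {w \<in> space (measure_pmf ?M). exp (lam * y) \<le> exp (lam * ?Y w)}
       \<le> measure_pmf.expectation ?M (\<lambda>w. exp (lam * ?Y w)) / exp (lam * y)"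
      by (rule integral_Markov_inequality_measure[where A="{}"])
         (auto intro: integrable_measure_pmf_finite[OF fin])
    thus ?thesis by (simp only: space_measure_pmf UNIV_I simp_thms)
  qed
  also have "measure_pmf.expectation ?M (\<lambda>w. exp (lam * ?Y w))
       = measure_pmf.expectation ?M (\<lambda>w. \<Prod>p\<in>I. exp (lam * \<alpha> p * (of_bool (w p) - q p)))"
    by (simp add: sum_distrib_left exp_sum[OF I] mult.assoc)
  also have "\<dots> = (\<Prod>p\<in>I. measure_pmf.expectation (bernoulli_pmf (q p)) (\<lambda>b. exp (lam * \<alpha> p * (of_bool b - q p))))"
    by (rule expectation_prod_Pi_pmf[OF I]) (auto intro: integrable_measure_pmf_finite)
  also have "\<dots> \<le> (\<Prod>p\<in>I. exp ((lam * \<alpha> p)\<^sup>2 * q p))"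
  proof (rule prod_mono, safe)
    fix p assume p: "p \<in> I"
    have "\<bar>lam * \<alpha> p\<bar> \<le> lam * \<beta>" using \<alpha>[OF p] l0 by (simp add: abs_mult)
    then show "measure_pmf.expectation (bernoulli_pmf (q p)) (\<lambda>b. exp (lam * \<alpha> p * (of_bool b - q p))) \<le> exp ((lam * \<alpha> p)\<^sup>2 * q p)"
      using bern_mgf[of "lam * \<alpha> p" "q p"] q[OF p] lb by simp
    show "0 \<le> measure_pmf.expectation (bernoulli_pmf (q p)) (\<lambda>b. exp (lam * \<alpha> p * (of_bool b - q p)))"
      by (rule Bochner_Integration.integral_nonneg) auto
  qed
  also have "\<dots> = exp (lam\<^sup>2 * (\<Sum>p\<in>I. (\<alpha> p)\<^sup>2 * q p))"
    by (simp add: exp_sum[OF I, symmetric] sum_distrib_left power_mult_distrib mult.assoc)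
  also have "\<dots> \<le> exp (lam\<^sup>2 * V)" using V by (simp add: mult_left_mono)
  finally have "measure_pmf.prob ?M {w. ?Y w \<ge> y} \<le> exp (lam\<^sup>2 * V) / exp (lam * y)"
    by (simp add: divide_right_mono)
  also have "\<dots> = exp (lam\<^sup>2 * V - lam * y)" by (simp add: exp_diff)
  also have "lam\<^sup>2 * V - lam * y \<le> - (y\<^sup>2 / (4 * V + 2 * \<beta> * y))"
  proof -
    have "lam\<^sup>2 * V - lam * y = y\<^sup>2 * V / d\<^sup>2 - y\<^sup>2 / d" by (simp add: lam_def power2_eq_square field_simps)
    also have "y\<^sup>2 * V / d\<^sup>2 \<le> y\<^sup>2 / (2 * d)"
    proof -
      have "V * (2 * d) \<le> d\<^sup>2" using \<beta> y V0 by (simp add: d_def power2_eq_square algebra_simps)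
      hence "V * 2 \<le> d" using d by (simp add: power2_eq_square)
      hence "(V * 2) * (y * y) \<le> d * (y * y)" by (intro mult_right_mono) auto
      then show ?thesis using d by (simp add: field_simps power2_eq_square)
    qed
    hence "y\<^sup>2 * V / d\<^sup>2 - y\<^sup>2 / d \<le> y\<^sup>2 / (2 * d) - y\<^sup>2 / d" by simp
    also have "\<dots> = - (y\<^sup>2 / (2 * d))" using d by (simp add: field_simps)
    also have "2 * d = 4 * V + 2 * \<beta> * y" by (simp add: d_def)
    finally show ?thesis .
  qed
  hence "exp (lam\<^sup>2 * V - lam * y) \<le> exp (- (y\<^sup>2 / (4 * V + 2 * \<beta> * y)))" by simp
  finally show ?thesis .
qed

lemma bernstein_abs:
  fixes I :: "'a set" and q \<alpha> :: "'a \<Rightarrow> real"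
  assumes I: "finite I" and q: "\<And>p. p \<in> I \<Longrightarrow> 0 \<le> q p \<and> q p \<le> 1"
    and \<alpha>: "\<And>p. p \<in> I \<Longrightarrow> \<bar>\<alpha> p\<bar> \<le> \<beta>" and \<beta>: "\<beta> > 0" and y: "y > 0"
    and V: "(\<Sum>p\<in>I. (\<alpha> p)\<^sup>2 * q p) \<le> V"
  shows "measure_pmf.prob (Pi_pmf I False (\<lambda>p. bernoulli_pmf (q p)))
           {w. \<bar>\<Sum>p\<in>I. \<alpha> p * (of_bool (w p) - q p)\<bar> \<ge> y} \<le> 2 * exp (- (y\<^sup>2 / (4 * V + 2 * \<beta> * y)))"
proof -
  let ?M = "Pi_pmf I False (\<lambda>p. bernoulli_pmf (q p))"
  have "{w. \<bar>\<Sum>p\<in>I. \<alpha> p * (of_bool (w p) - q p)\<bar> \<ge> y} \<subseteq>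
        {w. (\<Sum>p\<in>I. \<alpha> p * (of_bool (w p) - q p)) \<ge> y} \<union> {w. (\<Sum>p\<in>I. (- \<alpha> p) * (of_bool (w p) - q p)) \<ge> y}"
    by (auto simp: sum_negf)
  hence "measure_pmf.prob ?M {w. \<bar>\<Sum>p\<in>I. \<alpha> p * (of_bool (w p) - q p)\<bar> \<ge> y}
     \<le> measure_pmf.prob ?M ({w. (\<Sum>p\<in>I. \<alpha> p * (of_bool (w p) - q p)) \<ge> y} \<union> {w. (\<Sum>p\<in>I. (- \<alpha> p) * (of_bool (w p) - q p)) \<ge> y})"
    by (intro measure_pmf.finite_measure_mono) auto
  also have "\<dots> \<le> measure_pmf.prob ?M {w. (\<Sum>p\<in>I. \<alpha> p * (of_bool (w p) - q p)) \<ge> y}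
       + measure_pmf.prob ?M {w. (\<Sum>p\<in>I. (- \<alpha> p) * (of_bool (w p) - q p)) \<ge> y}"
    by (rule measure_Un_le) auto
  also have "\<dots> \<le> exp (- (y\<^sup>2 / (4 * V + 2 * \<beta> * y))) + exp (- (y\<^sup>2 / (4 * V + 2 * \<beta> * y)))"
    by (intro add_mono bernstein_one[OF I q _ \<beta> y] ) (use \<alpha> V in auto)
  finally show ?thesis by simp
qed



lemma lip01:
  fixes f f' :: "real \<Rightarrow> real"
  assumes d: "\<And>y. y \<in> {0..1} \<Longrightarrow> (f has_real_derivative f' y) (at y within {0..1})"
    and b: "\<And>y. y \<in> {0..1} \<Longrightarrow> \<bar>f' y\<bar> \<le> B"
    and x: "x \<in> {0..1}" and y: "y \<in> {0..1}"
  shows "\<bar>f x - f y\<bar> \<le> B * \<bar>x - y\<bar>"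
proof -
  have "norm (f x - f y) \<le> B * norm (x - y)"
  proof (rule differentiable_bound[where S="{0..1}" and f'="\<lambda>y h. f' y * h"])
    show "convex {0..1::real}" by simp
    show "(f has_derivative (\<lambda>h. f' z * h)) (at z within {0..1})" if "z \<in> {0..1}" for z
      using d[OF that] by (simp add: has_field_derivative_def)
    show "onorm (\<lambda>h. f' z * h) \<le> B" if "z \<in> {0..1}" for z
      by (rule onorm_le) (use b[OF that] in \<open>auto simp: abs_mult intro: mult_right_mono\<close>)
  qed (use x y in auto)
  thus ?thesis by simp
qed

lemma taylor4:
  fixes t t' t'' :: "real \<Rightarrow> real"
  assumes T: "\<forall>y\<in>{0..1}. (t has_real_derivative t' y) (at y within {0..1}) \<and>
                     (t' has_real_derivative t'' y) (at y within {0..1}) \<and>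
                     \<bar>t' y\<bar> \<le> 1 \<and> \<bar>t'' y\<bar> \<le> 1"
    and a1: "a1 \<in> {0..1}" and b1: "b1 \<in> {0..1}" and a0: "a0 \<in> {0..1}" and b0: "b0 \<in> {0..1}"
  shows "\<bar>(t a1 - t b1) - (t a0 - t b0)\<bar> \<le> 2 * \<bar>(a1 - a0) - (b1 - b0)\<bar> + \<bar>b1 - b0\<bar> * \<bar>a0 - b0\<bar>"
proof -
  define \<Delta> where "\<Delta> = (a1 - a0) - (b1 - b0)"
  define qq where "qq = (\<lambda>s::real. b1 + s * (a1 - b1))"
  define pp where "pp = (\<lambda>s::real. b0 + s * (a0 - b0))"
  have conv: "u + s * (v - u) \<in> {0..1}" if "u \<in> {0..1}" "v \<in> {0..1}" "s \<in> {0..1}" for u v s :: real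
  proof -
    have "u + s * (v - u) = (1 - s) * u + s * v" by (simp add: algebra_simps)
    moreover have "0 \<le> (1 - s) * u + s * v" using that by auto
    moreover have "(1 - s) * u + s * v \<le> (1 - s) * 1 + s * 1"
      using that by (intro add_mono mult_left_mono) auto
    ultimately show ?thesis by auto
  qed
  have qq01: "qq s \<in> {0..1}" if "s \<in> {0..1}" for s using conv[OF b1 a1 that] by (simp add: qq_def)
  have pp01: "pp s \<in> {0..1}" if "s \<in> {0..1}" for s using conv[OF b0 a0 that] by (simp add: pp_def)
  define F where "F = (\<lambda>s. t (qq s) - t (pp s))"
  define F' where "F' = (\<lambda>s. t' (qq s) * (a1 - b1) - t' (pp s) * (a0 - b0))"
  have chain: "((\<lambda>s. t (u + s * (v - u))) has_real_derivative t' (u + s * (v - u)) * (v - u)) (at s within {0..1})"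
    if "u \<in> {0..1}" "v \<in> {0..1}" "s \<in> {0..1}" for u v s :: real
  proof -
    let ?g = "\<lambda>s::real. u + s * (v - u)"
    have g: "(?g has_real_derivative (v - u)) (at s within {0..1})"
      by (auto intro!: derivative_eq_intros)
    have "(t has_real_derivative t' (?g s)) (at (?g s) within {0..1})"
      using T conv[OF that] by auto
    hence "(t has_real_derivative t' (?g s)) (at (?g s) within (?g ` {0..1}))"
      by (rule has_field_derivative_subset) (use conv[OF that(1,2)] in auto)
    from DERIV_image_chain[OF this g] show ?thesis by (simp add: o_def)
  qed
  have dF: "(F has_real_derivative F' s) (at s within {0..1})" if "s \<in> {0..1}" for s
    unfolding F_def F'_def qq_def pp_def
    by (intro DERIV_diff chain that a1 b1 a0 b0)
  have t'lip: "\<bar>t' x - t' y\<bar> \<le> \<bar>x - y\<bar>" if "x \<in> {0..1}" "y \<in> {0..1}" for x y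
    using lip01[of t' t'' 1 x y] T that by auto
  have bF: "\<bar>F' s\<bar> \<le> 2 * \<bar>\<Delta>\<bar> + \<bar>b1 - b0\<bar> * \<bar>a0 - b0\<bar>" if s: "s \<in> {0..1}" for s
  proof -
    have e: "F' s = t' (qq s) * \<Delta> + (t' (qq s) - t' (pp s)) * (a0 - b0)"
      by (simp add: F'_def \<Delta>_def algebra_simps)
    have "\<bar>t' (qq s) * \<Delta>\<bar> \<le> \<bar>\<Delta>\<bar>" using T qq01[OF s]
      by (auto simp: abs_mult intro: mult_left_le_one_le)
    moreover have "\<bar>qq s - pp s\<bar> \<le> \<bar>b1 - b0\<bar> + \<bar>\<Delta>\<bar>"
    proof -
      have "qq s - pp s = (b1 - b0) + s * \<Delta>" by (simp add: qq_def pp_def \<Delta>_def algebra_simps)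
      moreover have "\<bar>s * \<Delta>\<bar> \<le> \<bar>\<Delta>\<bar>" using s by (auto simp: abs_mult intro: mult_left_le_one_le)
      ultimately show ?thesis by linarith
    qed
    hence "\<bar>(t' (qq s) - t' (pp s)) * (a0 - b0)\<bar> \<le> (\<bar>b1 - b0\<bar> + \<bar>\<Delta>\<bar>) * \<bar>a0 - b0\<bar>"
      using t'lip[OF qq01[OF s] pp01[OF s]] by (auto simp: abs_mult intro: mult_right_mono)
    moreover have "(\<bar>b1 - b0\<bar> + \<bar>\<Delta>\<bar>) * \<bar>a0 - b0\<bar> \<le> \<bar>b1 - b0\<bar> * \<bar>a0 - b0\<bar> + \<bar>\<Delta>\<bar>"
    proof -
      have "\<bar>\<Delta>\<bar> * \<bar>a0 - b0\<bar> \<le> \<bar>\<Delta>\<bar>" using a0 b0 by (auto intro: mult_left_le)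
      thus ?thesis by (simp add: algebra_simps)
    qed
    ultimately show ?thesis unfolding e by linarith
  qed
  have "\<bar>F 1 - F 0\<bar> \<le> (2 * \<bar>\<Delta>\<bar> + \<bar>b1 - b0\<bar> * \<bar>a0 - b0\<bar>) * \<bar>1 - 0\<bar>"
    by (rule lip01[OF dF bF]) auto
  thus ?thesis by (simp add: F_def qq_def pp_def \<Delta>_def)
qed



definition Iset :: "nat \<Rightarrow> (nat \<times> nat) set" where
  "Iset n = {(i, j). i < j \<and> j < n}"

definition om :: "(nat \<Rightarrow> nat) \<Rightarrow> nat \<Rightarrow> nat \<Rightarrow> nat \<times> nat \<Rightarrow> real" where
  "om e a b p = (if a = b then 2 * of_bool (e (fst p) = a \<and> e (snd p) = a)
      else of_bool (e (fst p) = a \<and> e (snd p) = b) + of_bool (e (fst p) = b \<and> e (snd p) = a))"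

lemma finite_Iset[simp]: "finite (Iset n)"
  by (rule finite_subset[of _ "{..<n} \<times> {..<n}"]) (auto simp: Iset_def)

lemma om_range: "0 \<le> om e a b p \<and> om e a b p \<le> 2"
proof (cases "a = b")
  case True
  then show ?thesis by (simp add: om_def)
next
  case False
  have "(of_bool (e (fst p) = (a::nat) \<and> e (snd p) = b)::real) + of_bool (e (fst p) = (b::nat) \<and> e (snd p) = a) \<le> 2" by simp
  then show ?thesis using False by (simp add: om_def)
qed

lemma sum_upper:
  fixes g :: "nat \<Rightarrow> nat \<Rightarrow> real"
  shows "(\<Sum>i<n. \<Sum>j<n. if i < j then g i j else 0) = (\<Sum>p\<in>Iset n. g (fst p) (snd p))"
proof -
  have "(\<Sum>i<n. \<Sum>j<n. if i < j then g i j else 0)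
      = (\<Sum>p\<in>{..<n} \<times> {..<n}. if fst p < snd p then g (fst p) (snd p) else 0)"
    by (simp add: sum.cartesian_product case_prod_beta)
  also have "\<dots> = (\<Sum>p\<in>{p\<in>{..<n} \<times> {..<n}. fst p < snd p}. g (fst p) (snd p))"
    by (simp add: sum.inter_filter)
  also have "{p\<in>{..<n} \<times> {..<n}. fst p < snd p} = Iset n" by (auto simp: Iset_def)
  finally show ?thesis .
qed

lemma Otilde_eq: "Otilde n (adj w) e a b = (\<Sum>p\<in>Iset n. om e a b p * of_bool (w p))"
proof (cases "a = b")
  case True
  have "Ocount n (adj w) e a b = (\<Sum>i<n. \<Sum>j<n. if i < j then of_bool (w (i,j)) * of_bool (e i = a \<and> e j = a) else 0)"
    using True unfolding Ocount_def by (auto simp: adj_def intro!: sum.cong)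
  also have "\<dots> = (\<Sum>p\<in>Iset n. of_bool (w p) * of_bool (e (fst p) = a \<and> e (snd p) = a))"
    by (subst sum_upper) simp
  finally show ?thesis using True
    by (simp add: Otilde_def om_def sum_distrib_left mult.commute)
next
  case False
  define g where "g = (\<lambda>i j. adj w i j * of_bool (e i = a \<and> e j = b))"
  have "Ocount n (adj w) e a b = (\<Sum>i<n. \<Sum>j<n. g i j)" using False by (simp add: Ocount_def g_def)
  also have "\<dots> = (\<Sum>i<n. \<Sum>j<n. if i < j then g i j else 0) + (\<Sum>i<n. \<Sum>j<n. if j < i then g i j else 0)"
  proof -
    have "(\<Sum>i<n. \<Sum>j<n. g i j) = (\<Sum>i<n. \<Sum>j<n. (if i < j then g i j else 0) + (if j < i then g i j else 0))"
      by (intro sum.cong refl) (simp add: g_def adj_def)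
    thus ?thesis by (simp only: sum.distrib)
  qed
  also have "(\<Sum>i<n. \<Sum>j<n. if j < i then g i j else 0) = (\<Sum>i<n. \<Sum>j<n. if i < j then g j i else 0)"
    by (rule sum.swap)
  also have "(\<Sum>i<n. \<Sum>j<n. if i < j then g i j else 0) + (\<Sum>i<n. \<Sum>j<n. if i < j then g j i else 0)
      = (\<Sum>i<n. \<Sum>j<n. if i < j then g i j + g j i else 0)"
    by (simp add: sum.distrib[symmetric] if_distrib) (intro sum.cong refl, auto)
  also have "\<dots> = (\<Sum>p\<in>Iset n. g (fst p) (snd p) + g (snd p) (fst p))"
    by (rule sum_upper)
  also have "\<dots> = (\<Sum>p\<in>Iset n. om e a b p * of_bool (w p))"
  proof (intro sum.cong refl)
    fix p assume p: "p \<in> Iset n"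
    obtain i j where ij: "p = (i, j)" "i < j" using p by (cases p) (auto simp: Iset_def)
    have 1: "g i j = of_bool (w (i, j)) * of_bool (e i = a \<and> e j = b)" using ij by (simp add: g_def adj_def)
    have 2: "g j i = of_bool (w (i, j)) * of_bool (e i = b \<and> e j = a)"
    proof -
      have "(e j = a \<and> e i = b) = (e i = b \<and> e j = a)" by blast
      thus ?thesis using ij by (simp add: g_def adj_def)
    qed
    show "g (fst p) (snd p) + g (snd p) (fst p) = om e a b p * of_bool (w p)"
      using False unfolding ij(1) fst_conv snd_conv 1 2 by (simp add: om_def algebra_simps)
  qed
  finally show ?thesis using False by (simp add: Otilde_def)
qed

lemma sbm_alt: "sbm_pmf n P Z = Pi_pmf (Iset n) False (\<lambda>p. bernoulli_pmf (P (Z (fst p)) (Z (snd p))))"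
  unfolding sbm_pmf_def Iset_def by (simp add: case_prod_unfold)

lemma expect_Otilde:
  assumes Q: "\<And>p. p \<in> Iset n \<Longrightarrow> 0 \<le> P (Z (fst p)) (Z (snd p)) \<and> P (Z (fst p)) (Z (snd p)) \<le> 1"
  shows "measure_pmf.expectation (sbm_pmf n P Z) (\<lambda>w. Otilde n (adj w) e a b)
         = (\<Sum>p\<in>Iset n. om e a b p * P (Z (fst p)) (Z (snd p)))"
proof -
  let ?M = "Pi_pmf (Iset n) False (\<lambda>p. bernoulli_pmf (P (Z (fst p)) (Z (snd p))))"
  have fin: "finite (set_pmf ?M)"
    by (rule finite_subset[OF set_Pi_pmf_subset']) (auto intro!: finite_PiE_dflt)
  have "measure_pmf.expectation ?M (\<lambda>w. \<Sum>p\<in>Iset n. om e a b p * of_bool (w p))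
      = (\<Sum>p\<in>Iset n. measure_pmf.expectation ?M (\<lambda>w. om e a b p * of_bool (w p)))"
    by (rule Bochner_Integration.integral_sum) (auto intro: integrable_measure_pmf_finite[OF fin])
  also have "\<dots> = (\<Sum>p\<in>Iset n. om e a b p * P (Z (fst p)) (Z (snd p)))"
  proof (intro sum.cong refl)
    fix p assume p: "p \<in> Iset n"
    have "measure_pmf.expectation ?M (\<lambda>w. om e a b p * of_bool (w p))
        = measure_pmf.expectation (map_pmf (\<lambda>w. w p) ?M) (\<lambda>v. om e a b p * of_bool v)"
      by simp
    also have "map_pmf (\<lambda>w. w p) ?M = bernoulli_pmf (P (Z (fst p)) (Z (snd p)))"
      using p by (simp add: Pi_pmf_component)
    finally show "measure_pmf.expectation ?M (\<lambda>w. om e a b p * of_bool (w p)) = om e a b p * P (Z (fst p)) (Z (snd p))"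
      using Q[OF p] by simp
  qed
  finally show ?thesis by (simp add: sbm_alt Otilde_eq)
qed

lemma card_Iset: "2 * card (Iset n) \<le> n * n"
proof -
  have d: "Iset n \<inter> prod.swap ` Iset n = {}" by (auto simp: Iset_def)
  have "Iset n \<union> prod.swap ` Iset n \<subseteq> {..<n} \<times> {..<n}" by (auto simp: Iset_def)
  hence "card (Iset n \<union> prod.swap ` Iset n) \<le> card ({..<n} \<times> {..<n})"
    by (intro card_mono) auto
  moreover have "card (Iset n \<union> prod.swap ` Iset n) = card (Iset n) + card (prod.swap ` Iset n)"
    using d by (intro card_Un_disjoint) auto
  moreover have "card (prod.swap ` Iset n) = card (Iset n)" by (intro card_image) auto
  ultimately show ?thesis by (simp add: card_cartesian_product)
qed

lemma card_touch:
  assumes "S \<subseteq> {..<n}"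
  shows "card {p\<in>Iset n. fst p \<in> S \<or> snd p \<in> S} \<le> 2 * card S * n"
proof -
  have "{p\<in>Iset n. fst p \<in> S \<or> snd p \<in> S} \<subseteq> S \<times> {..<n} \<union> {..<n} \<times> S"
    by (auto simp: Iset_def)
  hence "card {p\<in>Iset n. fst p \<in> S \<or> snd p \<in> S} \<le> card (S \<times> {..<n} \<union> {..<n} \<times> S)"
    using assms by (intro card_mono) (auto intro: finite_subset)
  also have "\<dots> \<le> card (S \<times> {..<n}) + card ({..<n} \<times> S)" by (rule card_Un_le)
  also have "\<dots> = 2 * card S * n" by (simp add: card_cartesian_product)
  finally show ?thesis .
qed



definition Qf :: "(nat \<Rightarrow> nat \<Rightarrow> real) \<Rightarrow> (nat \<Rightarrow> nat) \<Rightarrow> nat \<times> nat \<Rightarrow> real" where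
  "Qf P Z p = P (Z (fst p)) (Z (snd p))"

definition Uf :: "nat \<Rightarrow> (nat \<Rightarrow> nat) \<Rightarrow> nat \<Rightarrow> nat \<Rightarrow> (nat \<times> nat \<Rightarrow> bool) \<Rightarrow> real" where
  "Uf n e a b w = (\<Sum>p\<in>Iset n. om e a b p * of_bool (w p)) / real n ^ 2"

definition Vf :: "nat \<Rightarrow> (nat \<Rightarrow> nat \<Rightarrow> real) \<Rightarrow> (nat \<Rightarrow> nat) \<Rightarrow> (nat \<Rightarrow> nat) \<Rightarrow> nat \<Rightarrow> nat \<Rightarrow> real" where
  "Vf n P Z e a b = (\<Sum>p\<in>Iset n. om e a b p * Qf P Z p) / real n ^ 2"

lemma Xmat_eq:
  assumes Q: "\<And>p. p \<in> Iset n \<Longrightarrow> 0 \<le> Qf P Z p \<and> Qf P Z p \<le> 1"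
  shows "Xmat n P Z t w e a b = t a b (Uf n e a b w) - t a b (Vf n P Z e a b)"
proof -
  have "measure_pmf.expectation (sbm_pmf n P Z) (\<lambda>w'. Otilde n (adj w') e a b) = (\<Sum>p\<in>Iset n. om e a b p * Qf P Z p)"
    unfolding Qf_def by (rule expect_Otilde) (use Q in \<open>auto simp: Qf_def\<close>)
  thus ?thesis unfolding Xmat_def Uf_def Vf_def by (simp only: Otilde_eq)
qed

lemma sum_om_le:
  assumes "\<And>p. p \<in> Iset n \<Longrightarrow> 0 \<le> f p \<and> f p \<le> 1"
  shows "0 \<le> (\<Sum>p\<in>Iset n. om e a b p * f p) \<and> (\<Sum>p\<in>Iset n. om e a b p * f p) \<le> real n ^ 2"
proof
  show "0 \<le> (\<Sum>p\<in>Iset n. om e a b p * f p)"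
    using assms om_range by (intro sum_nonneg mult_nonneg_nonneg) auto
  have "(\<Sum>p\<in>Iset n. om e a b p * f p) \<le> (\<Sum>p\<in>Iset n. 2)"
  proof (rule sum_mono)
    fix p assume p: "p \<in> Iset n"
    have "om e a b p * f p \<le> 2 * 1" using assms[OF p] om_range[of e a b p] by (intro mult_mono) auto
    thus "om e a b p * f p \<le> 2" by simp
  qed
  also have "\<dots> = real (2 * card (Iset n))" by simp
  also have "\<dots> \<le> real (n * n)" using card_Iset by (subst of_nat_le_iff) 
  finally show "(\<Sum>p\<in>Iset n. om e a b p * f p) \<le> real n ^ 2" by (simp add: power2_eq_square)
qed

lemma Uf_range: "n > 0 \<Longrightarrow> Uf n e a b w \<in> {0..1}"
  using sum_om_le[of n "\<lambda>p. of_bool (w p)" e a b] by (auto simp: Uf_def)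

lemma Vf_range: "n > 0 \<Longrightarrow> (\<And>p. p \<in> Iset n \<Longrightarrow> 0 \<le> Qf P Z p \<and> Qf P Z p \<le> 1) \<Longrightarrow> Vf n P Z e a b \<in> {0..1}"
  using sum_om_le[of n "Qf P Z" e a b] by (auto simp: Vf_def)



lemma ar1:
  fixes x nn mm s :: real
  assumes x: "x > 0" and nn: "nn > 0" and mm: "mm \<ge> 0" and s: "s \<ge> 0"
  shows "(1/2048) * x\<^sup>2 * nn\<^sup>2 / (mm * s / nn + x) \<le> (x/4)\<^sup>2 / (4 * (8 * mm * s * nn / (nn\<^sup>2)\<^sup>2) + 2 * (2 / nn\<^sup>2) * (x/4))"
proof -
  have ms: "mm * s \<ge> 0" using mm s by simp
  have e1: "(1/2048) * x\<^sup>2 * nn\<^sup>2 / (mm * s / nn + x) = x\<^sup>2 * nn^3 / (2048 * (mm * s + x * nn))"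
    using nn x ms by (simp add: field_simps power2_eq_square power3_eq_cube)
  have e2: "(x/4)\<^sup>2 / (4 * (8 * mm * s * nn / (nn\<^sup>2)\<^sup>2) + 2 * (2 / nn\<^sup>2) * (x/4)) = x\<^sup>2 * nn^3 / (512 * (mm * s) + 16 * x * nn)"
    using nn x ms by (simp add: field_simps power2_eq_square power3_eq_cube)
  have "512 * (mm * s) + 16 * x * nn \<le> 2048 * (mm * s + x * nn)" using ms x nn by simp
  moreover have p1: "0 < 512 * (mm * s) + 16 * x * nn" using ms x nn by (simp add: add_nonneg_pos)
  moreover have p2: "0 < 2048 * (mm * s + x * nn)" using ms x nn by (simp add: add_nonneg_pos)
  ultimately have "x\<^sup>2 * nn^3 / (2048 * (mm * s + x * nn)) \<le> x\<^sup>2 * nn^3 / (512 * (mm * s) + 16 * x * nn)"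
    using x nn by (intro divide_left_mono mult_pos_pos) auto
  thus ?thesis using e1 e2 by simp
qed

lemma ar2:
  fixes x nn mm s :: real
  assumes x: "x > 0" and nn: "nn > 0" and mm: "mm \<le> nn" and s1: "s \<le> 1" and ms: "mm * s > 0" and s0: "s \<ge> 0"
  shows "(1/2048) * x\<^sup>2 * nn\<^sup>2 / (mm * s / nn + x) \<le> (x * nn / (8 * mm * s))\<^sup>2 / (4 * (2 * s / nn\<^sup>2) + 2 * (2 / nn\<^sup>2) * (x * nn / (8 * mm * s)))"
proof -
  have s: "s > 0" and m: "mm > 0" using ms s0 by (auto simp: zero_less_mult_iff)
  have e1: "(1/2048) * x\<^sup>2 * nn\<^sup>2 / (mm * s / nn + x) = x\<^sup>2 * nn^3 / (2048 * (mm * s + x * nn))"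
    using nn x ms by (simp add: field_simps power2_eq_square power3_eq_cube)
  have e2: "(x * nn / (8 * mm * s))\<^sup>2 / (4 * (2 * s / nn\<^sup>2) + 2 * (2 / nn\<^sup>2) * (x * nn / (8 * mm * s)))
       = x\<^sup>2 * nn^3 / ((512 * mm\<^sup>2 * s^3 + 32 * mm * s * x * nn) / nn)"
    using nn x s m by (simp add: field_simps power2_eq_square power3_eq_cube)
  have a: "mm * s * s \<le> nn"
  proof -
    have "mm * (s * s) \<le> nn * 1" using m s s1 mm by (intro mult_mono) (auto simp: mult_le_one)
    thus ?thesis by (simp add: mult.assoc)
  qed
  have "mm * s \<le> mm * 1" using s1 m by (intro mult_left_mono) auto
  hence b: "mm * s \<le> nn" using mm by simp
  have "512 * mm\<^sup>2 * s^3 \<le> 2048 * (mm * s * nn)"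
  proof -
    have "512 * mm\<^sup>2 * s^3 = 512 * (mm * s) * (mm * s * s)" by (simp add: power2_eq_square power3_eq_cube)
    also have "\<dots> \<le> 512 * (mm * s) * nn" using a ms by (intro mult_left_mono) auto
    also have "\<dots> \<le> 2048 * (mm * s * nn)" using mult_pos_pos[OF ms nn] by (simp add: algebra_simps)
    finally show ?thesis .
  qed
  moreover have "32 * mm * s * x * nn \<le> 2048 * (x * nn * nn)"
  proof -
    have "32 * mm * s * x * nn = 32 * (x * nn) * (mm * s)" by simp
    also have "\<dots> \<le> 32 * (x * nn) * nn" using b x nn by (intro mult_left_mono) auto
    also have "\<dots> \<le> 2048 * (x * nn * nn)" using mult_pos_pos[OF mult_pos_pos[OF x nn] nn] by (simp add: algebra_simps)
    finally show ?thesis .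
  qed
  ultimately have "512 * mm\<^sup>2 * s^3 + 32 * mm * s * x * nn \<le> 2048 * (mm * s * nn) + 2048 * (x * nn * nn)"
    by (rule add_mono)
  also have "\<dots> = 2048 * (mm * s + x * nn) * nn" by (simp add: algebra_simps)
  finally have le: "(512 * mm\<^sup>2 * s^3 + 32 * mm * s * x * nn) / nn \<le> 2048 * (mm * s + x * nn)"
    using nn by (simp add: pos_divide_le_eq)
  have "0 < 32 * mm * s * x * nn" using nn x s m by simp
  moreover have "0 \<le> 512 * mm\<^sup>2 * s^3" using s m by simp
  ultimately have "0 < 512 * mm\<^sup>2 * s^3 + 32 * mm * s * x * nn" by linarith
  hence pos: "0 < (512 * mm\<^sup>2 * s^3 + 32 * mm * s * x * nn) / nn" using nn by simp
  have p2: "0 < 2048 * (mm * s + x * nn)" using ms x nn by (simp add: add_nonneg_pos)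
  have "x\<^sup>2 * nn^3 / (2048 * (mm * s + x * nn)) \<le> x\<^sup>2 * nn^3 / ((512 * mm\<^sup>2 * s^3 + 32 * mm * s * x * nn) / nn)"
    using le pos x nn ms p2 by (intro divide_left_mono mult_pos_pos) auto
  thus ?thesis using e1 e2 by simp
qed



lemma om_same:
  assumes "e (fst p) = e' (fst p)" "e (snd p) = e' (snd p)"
  shows "om e a b p = om e' a b p"
  using assms by (simp add: om_def)

lemma event_bound:
  fixes n m :: nat and s x :: real
  assumes n: "n > 0" and mn: "m \<le> n"
    and Q: "\<And>p. p \<in> Iset n \<Longrightarrow> 0 \<le> Qf P Z p \<and> Qf P Z p \<le> s" and s1: "s \<le> 1" and s0: "0 \<le> s"
    and S: "card {i. i < n \<and> e i \<noteq> Z i} \<le> m"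
    and T: "\<forall>y\<in>{0..1}. (t a b has_real_derivative t' y) (at y within {0..1}) \<and>
                     (t' has_real_derivative t'' y) (at y within {0..1}) \<and>
                     \<bar>t' y\<bar> \<le> 1 \<and> \<bar>t'' y\<bar> \<le> 1"
    and x: "x > 0"
  shows "measure_pmf.prob (sbm_pmf n P Z) {w. \<bar>Xmat n P Z t w e a b - Xmat n P Z t w Z a b\<bar> > x}
     \<le> 4 * exp (- ((1/2048) * x\<^sup>2 * real n ^ 2) / (real m * s / real n + x))"
proof -
  define S where "S = {i. i < n \<and> e i \<noteq> Z i}"
  have Sn: "S \<subseteq> {..<n}" by (auto simp: S_def)
  have cS: "card S \<le> m" using S by (simp add: S_def)
  have Q1: "\<And>p. p \<in> Iset n \<Longrightarrow> 0 \<le> Qf P Z p \<and> Qf P Z p \<le> 1" using Q s1 by force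
  let ?M = "Pi_pmf (Iset n) False (\<lambda>p. bernoulli_pmf (Qf P Z p))"
  have M: "sbm_pmf n P Z = ?M" by (simp add: sbm_alt Qf_def)
  define N where "N = real n ^ 2"
  have N: "N > 0" using n by (simp add: N_def)
  define \<alpha> where "\<alpha> = (\<lambda>p. (om e a b p - om Z a b p) / N)"
  define D where "D = (\<lambda>w. \<Sum>p\<in>Iset n. \<alpha> p * (of_bool (w p) - Qf P Z p))"
  define db where "db = (\<Sum>p\<in>Iset n. \<alpha> p * Qf P Z p)"
  define \<gamma> where "\<gamma> = (\<lambda>p. om Z a b p / N)"
  define R where "R = (\<lambda>w. \<Sum>p\<in>Iset n. \<gamma> p * (of_bool (w p) - Qf P Z p))"
  define TT where "TT = {p\<in>Iset n. fst p \<in> S \<or> snd p \<in> S}"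
  have cTT: "real (card TT) \<le> 2 * real m * real n"
  proof -
    have "card TT \<le> 2 * card S * n" unfolding TT_def by (rule card_touch[OF Sn])
    also have "\<dots> \<le> 2 * m * n" using cS by simp
    finally have "real (card TT) \<le> real (2 * m * n)" by (simp only: of_nat_le_iff)
    thus ?thesis by simp
  qed
  have TTsub: "TT \<subseteq> Iset n" by (auto simp: TT_def)
  have \<alpha>0: "\<alpha> p = 0" if "p \<in> Iset n" "p \<notin> TT" for p
  proof -
    have "fst p < n" "snd p < n" using that(1) by (auto simp: Iset_def)
    hence "e (fst p) = Z (fst p)" "e (snd p) = Z (snd p)" using that by (auto simp: TT_def S_def)
    thus ?thesis using om_same[of e p Z a b] by (simp add: \<alpha>_def)
  qed
  have \<alpha>b: "\<bar>\<alpha> p\<bar> \<le> 2 / N" for p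
  proof -
    have "\<bar>om e a b p - om Z a b p\<bar> \<le> 2" using om_range[of e a b p] om_range[of Z a b p] by linarith
    thus ?thesis using N by (simp add: \<alpha>_def divide_right_mono)
  qed
  have \<gamma>b: "\<bar>\<gamma> p\<bar> \<le> 2 / N" for p
    using om_range[of Z a b p] N by (simp add: \<gamma>_def divide_right_mono)
  have lin4: "(\<Sum>p\<in>Iset n. (f p - g p) * (u p - v p)) =
      (\<Sum>p\<in>Iset n. f p * u p) - (\<Sum>p\<in>Iset n. g p * u p) - ((\<Sum>p\<in>Iset n. f p * v p) - (\<Sum>p\<in>Iset n. g p * v p))"
    for f g u v :: "nat \<times> nat \<Rightarrow> real"
  proof -
    have "(\<Sum>p\<in>Iset n. (f p - g p) * (u p - v p)) = (\<Sum>p\<in>Iset n. f p * u p - g p * u p - (f p * v p - g p * v p))"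
      by (rule sum.cong) (simp_all add: algebra_simps)
    thus ?thesis by (simp only: sum_subtractf)
  qed
  have dd: "a1 / N - b1 / N - (c1 / N - d1 / N) = (a1 - b1 - (c1 - d1)) / N" for a1 b1 c1 d1
    by (simp add: diff_divide_distrib)
  have F1: "(Uf n e a b w - Uf n Z a b w) - (Vf n P Z e a b - Vf n P Z Z a b) = D w" for w
  proof -
    have "D w = (\<Sum>p\<in>Iset n. (om e a b p - om Z a b p) * (of_bool (w p) - Qf P Z p)) / N"
      by (simp add: D_def \<alpha>_def sum_divide_distrib)
    thus ?thesis unfolding lin4 Uf_def Vf_def N_def[symmetric] dd by simp
  qed
  have F2: "Vf n P Z e a b - Vf n P Z Z a b = db"
    by (simp add: Vf_def db_def \<alpha>_def N_def sum_divide_distrib diff_divide_distrib sum_subtractf[symmetric] left_diff_distrib)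
  have lin2: "(\<Sum>p\<in>Iset n. g p * (u p - v p)) = (\<Sum>p\<in>Iset n. g p * u p) - (\<Sum>p\<in>Iset n. g p * v p)"
    for g u v :: "nat \<times> nat \<Rightarrow> real"
    by (simp add: right_diff_distrib sum_subtractf)
  have F3: "Uf n Z a b w - Vf n P Z Z a b = R w" for w
  proof -
    have "R w = (\<Sum>p\<in>Iset n. om Z a b p * (of_bool (w p) - Qf P Z p)) / N"
      by (simp add: R_def \<gamma>_def sum_divide_distrib)
    thus ?thesis unfolding lin2 Uf_def Vf_def N_def[symmetric] by (simp add: diff_divide_distrib)
  qed
  have sumTT: "(\<Sum>p\<in>Iset n. f p) = (\<Sum>p\<in>TT. f p)" if "\<And>p. p \<in> Iset n \<Longrightarrow> p \<notin> TT \<Longrightarrow> f p = 0" for f :: "nat \<times> nat \<Rightarrow> real"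
    by (rule sum.mono_neutral_right) (use TTsub that in auto)
  have V1: "(\<Sum>p\<in>Iset n. (\<alpha> p)\<^sup>2 * Qf P Z p) \<le> 8 * real m * s * real n / N\<^sup>2"
  proof -
    have "(\<Sum>p\<in>Iset n. (\<alpha> p)\<^sup>2 * Qf P Z p) = (\<Sum>p\<in>TT. (\<alpha> p)\<^sup>2 * Qf P Z p)"
      by (rule sumTT) (simp add: \<alpha>0)
    also have "\<dots> \<le> (\<Sum>p\<in>TT. (2 / N)\<^sup>2 * s)"
    proof (rule sum_mono)
      fix p assume p: "p \<in> TT"
      have "(\<alpha> p)\<^sup>2 \<le> (2 / N)\<^sup>2" using \<alpha>b[of p] by (metis abs_ge_zero power2_abs power_mono)
      thus "(\<alpha> p)\<^sup>2 * Qf P Z p \<le> (2 / N)\<^sup>2 * s" using Q[of p] p TTsub by (intro mult_mono) auto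
    qed
    also have "\<dots> = real (card TT) * (4 / N\<^sup>2 * s)" by (simp add: power_divide)
    also have "\<dots> \<le> (2 * real m * real n) * (4 / N\<^sup>2 * s)"
      using cTT s0 N by (intro mult_right_mono) auto
    also have "\<dots> = 8 * real m * s * real n / N\<^sup>2" by simp
    finally show ?thesis .
  qed
  have dbb: "\<bar>db\<bar> \<le> 4 * real m * s * real n / N"
  proof -
    have "\<bar>db\<bar> = \<bar>\<Sum>p\<in>TT. \<alpha> p * Qf P Z p\<bar>" unfolding db_def by (subst sumTT) (simp_all add: \<alpha>0)
    also have "\<dots> \<le> (\<Sum>p\<in>TT. \<bar>\<alpha> p * Qf P Z p\<bar>)" by (rule sum_abs)
    also have "\<dots> \<le> (\<Sum>p\<in>TT. 2 / N * s)"
    proof (rule sum_mono)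
      fix p assume p: "p \<in> TT"
      show "\<bar>\<alpha> p * Qf P Z p\<bar> \<le> 2 / N * s"
      proof -
        have q: "0 \<le> Qf P Z p" "Qf P Z p \<le> s" using Q[of p] p TTsub by auto
        have "\<bar>\<alpha> p\<bar> * \<bar>Qf P Z p\<bar> \<le> 2 / N * s" using \<alpha>b[of p] q s0 N by (intro mult_mono) auto
        thus ?thesis by (simp add: abs_mult)
      qed
    qed
    also have "\<dots> = real (card TT) * (2 / N * s)" by simp
    also have "\<dots> \<le> (2 * real m * real n) * (2 / N * s)"
      using cTT s0 N by (intro mult_right_mono) auto
    also have "\<dots> = 4 * real m * s * real n / N" by simp
    finally show ?thesis .
  qed
  have V2: "(\<Sum>p\<in>Iset n. (\<gamma> p)\<^sup>2 * Qf P Z p) \<le> 2 * s / N"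
  proof -
    have "(\<Sum>p\<in>Iset n. (\<gamma> p)\<^sup>2 * Qf P Z p) \<le> (\<Sum>p\<in>Iset n. (2 / N)\<^sup>2 * s)"
    proof (rule sum_mono)
      fix p assume p: "p \<in> Iset n"
      have "(\<gamma> p)\<^sup>2 \<le> (2 / N)\<^sup>2" using \<gamma>b[of p] by (metis abs_ge_zero power2_abs power_mono)
      thus "(\<gamma> p)\<^sup>2 * Qf P Z p \<le> (2 / N)\<^sup>2 * s" using Q[of p] p by (intro mult_mono) auto
    qed
    also have "\<dots> = real (2 * card (Iset n)) * (2 / N\<^sup>2 * s)" by (simp add: power_divide)
    also have "\<dots> \<le> real (n * n) * (2 / N\<^sup>2 * s)"
    proof (rule mult_right_mono)
      show "real (2 * card (Iset n)) \<le> real (n * n)" using card_Iset[of n] by (simp only: of_nat_le_iff)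
    qed (use s0 N in auto)
    also have "\<dots> = 2 * s / N" using N by (simp add: N_def power2_eq_square)
    finally show ?thesis .
  qed
  have nN: "N = real n * real n" by (simp add: N_def power2_eq_square)
  have dbb': "\<bar>db\<bar> \<le> 4 * (real m * s) / real n"
    using dbb n by (simp add: nN)
  have ms0: "0 \<le> real m * s" using s0 by simp
  define y where "y = x * real n / (8 * real m * s)"
  have incl: "{w. \<bar>Xmat n P Z t w e a b - Xmat n P Z t w Z a b\<bar> > x}
     \<subseteq> {w. \<bar>D w\<bar> \<ge> x / 4} \<union> {w. real m * s > 0 \<and> \<bar>R w\<bar> \<ge> y}"
  proof (rule subsetI, rule ccontr)
    fix w assume w: "w \<in> {w. \<bar>Xmat n P Z t w e a b - Xmat n P Z t w Z a b\<bar> > x}"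
      and nw: "w \<notin> {w. \<bar>D w\<bar> \<ge> x / 4} \<union> {w. real m * s > 0 \<and> \<bar>R w\<bar> \<ge> y}"
    have D4: "\<bar>D w\<bar> < x / 4" using nw by auto
    have tay: "\<bar>(t a b (Uf n e a b w) - t a b (Vf n P Z e a b)) - (t a b (Uf n Z a b w) - t a b (Vf n P Z Z a b))\<bar>
        \<le> 2 * \<bar>(Uf n e a b w - Uf n Z a b w) - (Vf n P Z e a b - Vf n P Z Z a b)\<bar>
          + \<bar>Vf n P Z e a b - Vf n P Z Z a b\<bar> * \<bar>Uf n Z a b w - Vf n P Z Z a b\<bar>"
      by (rule taylor4[OF T Uf_range[OF n] Vf_range[OF n Q1] Uf_range[OF n] Vf_range[OF n Q1]])
    have prodb: "\<bar>db\<bar> * \<bar>R w\<bar> \<le> x / 2"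
    proof (cases "real m * s > 0")
      case False
      hence "real m * s = 0" using ms0 by linarith
      hence "4 * (real m * s) / real n = 0" by simp
      hence "\<bar>db\<bar> \<le> 0" using dbb' by linarith
      hence "db = 0" by simp
      thus ?thesis using x by simp
    next
      case True
      hence Ry: "\<bar>R w\<bar> < y" using nw by auto
      have "\<bar>db\<bar> * \<bar>R w\<bar> \<le> (4 * (real m * s) / real n) * y"
        using dbb' Ry by (intro mult_mono) auto
      also have "\<dots> = x / 2"
      proof -
        have "real m \<noteq> 0" "s \<noteq> 0" using True by (auto simp del: of_nat_eq_0_iff)
        thus ?thesis using n by (simp add: y_def field_simps)
      qed
      finally show ?thesis .
    qed
    have "\<bar>Xmat n P Z t w e a b - Xmat n P Z t w Z a b\<bar> \<le> 2 * \<bar>D w\<bar> + \<bar>db\<bar> * \<bar>R w\<bar>"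
    proof -
      have x1: "Xmat n P Z t w e a b = t a b (Uf n e a b w) - t a b (Vf n P Z e a b)" by (rule Xmat_eq) (rule Q1)
      have x2: "Xmat n P Z t w Z a b = t a b (Uf n Z a b w) - t a b (Vf n P Z Z a b)" by (rule Xmat_eq) (rule Q1)
      show ?thesis using tay unfolding F1 unfolding F2 F3 x1 x2 .
    qed
    hence "\<bar>Xmat n P Z t w e a b - Xmat n P Z t w Z a b\<bar> < x" using D4 prodb by linarith
    thus False using w by simp
  qed
  define E where "E = exp (- ((1/2048) * x\<^sup>2 * real n ^ 2) / (real m * s / real n + x))"
  have E': "E = exp (- ((1/2048) * x\<^sup>2 * real n ^ 2 / (real m * s / real n + x)))"
    unfolding E_def by (simp only: minus_divide_left)
  have expm: "2 * exp (- B) \<le> 2 * E" if "(1/2048) * x\<^sup>2 * real n ^ 2 / (real m * s / real n + x) \<le> B" for B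
    unfolding E' using that by simp
  have P1: "measure_pmf.prob ?M {w. \<bar>D w\<bar> \<ge> x / 4} \<le> 2 * E"
  proof -
    have "measure_pmf.prob ?M {w. \<bar>D w\<bar> \<ge> x / 4}
        \<le> 2 * exp (- ((x/4)\<^sup>2 / (4 * (8 * real m * s * real n / N\<^sup>2) + 2 * (2 / N) * (x/4))))"
      unfolding D_def by (rule bernstein_abs[OF finite_Iset Q1 \<alpha>b _ _ V1]) (use N x in auto)
    also have "\<dots> \<le> 2 * E" unfolding N_def
      by (rule expm, rule ar1) (use x n s0 in auto)
    finally show ?thesis .
  qed
  have P2: "measure_pmf.prob ?M {w. real m * s > 0 \<and> \<bar>R w\<bar> \<ge> y} \<le> 2 * E"
  proof (cases "real m * s > 0")
    case False thus ?thesis by (simp add: E_def)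
  next
    case True
    have yp: "y > 0" unfolding y_def using True x n by (intro divide_pos_pos) (auto simp: mult.assoc)
    have "measure_pmf.prob ?M {w. real m * s > 0 \<and> \<bar>R w\<bar> \<ge> y} = measure_pmf.prob ?M {w. \<bar>R w\<bar> \<ge> y}"
      using True by simp
    also have "\<dots> \<le> 2 * exp (- (y\<^sup>2 / (4 * (2 * s / N) + 2 * (2 / N) * y)))"
      unfolding R_def by (rule bernstein_abs[OF finite_Iset Q1 \<gamma>b _ yp V2]) (use N in auto)
    also have "\<dots> \<le> 2 * E" unfolding N_def y_def
      by (rule expm, rule ar2) (use x n s0 s1 mn True in auto)
    finally show ?thesis .
  qed
  have "measure_pmf.prob (sbm_pmf n P Z) {w. \<bar>Xmat n P Z t w e a b - Xmat n P Z t w Z a b\<bar> > x}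
      \<le> measure_pmf.prob ?M ({w. \<bar>D w\<bar> \<ge> x / 4} \<union> {w. real m * s > 0 \<and> \<bar>R w\<bar> \<ge> y})"
    unfolding M by (intro measure_pmf.finite_measure_mono incl) auto
  also have "\<dots> \<le> measure_pmf.prob ?M {w. \<bar>D w\<bar> \<ge> x / 4} + measure_pmf.prob ?M {w. real m * s > 0 \<and> \<bar>R w\<bar> \<ge> y}"
    by (rule measure_Un_le) auto
  also have "\<dots> \<le> 4 * E" using P1 P2 by simp
  finally show ?thesis by (simp add: E_def)
qed



lemma supnorm_set: "{\<bar>M a b\<bar> | a b. a < K \<and> b < K} = (\<lambda>(a, b). \<bar>M a b\<bar>) ` ({..<K} \<times> {..<K})"
  by auto

lemma sn_ge: "a < K \<Longrightarrow> b < K \<Longrightarrow> \<bar>M a b\<bar> \<le> supnorm K M"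
  unfolding supnorm_def supnorm_set by (rule Max_ge) auto

lemma sn_gt:
  assumes "0 < K" "supnorm K M > x" shows "\<exists>a<K. \<exists>b<K. \<bar>M a b\<bar> > x"
proof -
  have "supnorm K M \<in> (\<lambda>(a, b). \<bar>M a b\<bar>) ` ({..<K} \<times> {..<K})"
    unfolding supnorm_def supnorm_set by (rule Max_in) (use assms in auto)
  then obtain a b where "a < K" "b < K" "supnorm K M = \<bar>M a b\<bar>" by auto
  thus ?thesis using assms(2) by metis
qed

lemma sn_le:
  assumes "0 < K" "\<And>a b. a < K \<Longrightarrow> b < K \<Longrightarrow> \<bar>M a b\<bar> \<le> c" shows "supnorm K M \<le> c"
  unfolding supnorm_def supnorm_set by (subst Max_le_iff) (use assms in auto)

lemma Otilde_cong:
  assumes "\<And>i. i < n \<Longrightarrow> e i = e' i"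
  shows "Otilde n (adj w) e a b = Otilde n (adj w) e' a b"
  unfolding Otilde_eq
proof (intro sum.cong refl)
  fix p assume "p \<in> Iset n"
  hence "fst p < n" "snd p < n" by (auto simp: Iset_def)
  thus "om e a b p * of_bool (w p) = om e' a b p * of_bool (w p)"
    using om_same[of e p e' a b] assms by simp
qed

lemma Xmat_cong:
  assumes "\<And>i. i < n \<Longrightarrow> e i = e' i"
  shows "Xmat n P Z t w e a b = Xmat n P Z t w e' a b"
proof -
  have "(\<lambda>w'. Otilde n (adj w') e a b) = (\<lambda>w'. Otilde n (adj w') e' a b)"
    by (rule ext, rule Otilde_cong[OF assms])
  thus ?thesis unfolding Xmat_def using Otilde_cong[OF assms, where w=w and a=a and b=b] by simp
qed

theorem lemmaA10:
  shows "\<exists>c>0. \<forall>(n::nat) (K::nat) (P::nat \<Rightarrow> nat \<Rightarrow> real) (Z::nat \<Rightarrow> nat)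
      (t::nat \<Rightarrow> nat \<Rightarrow> real \<Rightarrow> real) (m::nat) (x::real).
    0 < K \<longrightarrow>
    (\<forall>a<K. \<forall>b<K. P a b = P b a \<and> 0 \<le> P a b \<and> P a b \<le> 1) \<longrightarrow>
    (\<forall>i<n. Z i < K) \<longrightarrow>
    (\<forall>a<K. \<forall>b<K. \<exists>t' t''.
        (\<forall>y\<in>{0..1}. (t a b has_real_derivative t' y) (at y within {0..1}) \<and>
                     (t' has_real_derivative t'' y) (at y within {0..1}) \<and>
                     \<bar>t' y\<bar> \<le> 1 \<and> \<bar>t'' y\<bar> \<le> 1)) \<longrightarrow>
    m \<le> n \<longrightarrow> 0 < x \<longrightarrow>
    measure_pmf.prob (sbm_pmf n P Z)
      {w. \<exists>e. (\<forall>i<n. e i < K) \<and> card {i. i < n \<and> e i \<noteq> Z i} \<le> m \<and>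
              supnorm K (\<lambda>a b. Xmat n P Z t w e a b - Xmat n P Z t w Z a b) > x}
    \<le> 6 * real (n choose m) * real K ^ (m + 2) *
       exp (- (c * x\<^sup>2 * real n ^ 2) / (real m * supnorm K P / real n + x))"
proof (intro exI[of _ "1/2048"] conjI allI impI)
  show "(0::real) < 1/2048" by simp
  fix n K :: nat and P :: "nat \<Rightarrow> nat \<Rightarrow> real" and Z :: "nat \<Rightarrow> nat"
    and t :: "nat \<Rightarrow> nat \<Rightarrow> real \<Rightarrow> real" and m :: nat and x :: real
  assume K: "0 < K" and Pc: "\<forall>a<K. \<forall>b<K. P a b = P b a \<and> 0 \<le> P a b \<and> P a b \<le> 1"
    and Zc: "\<forall>i<n. Z i < K"
    and Tc: "\<forall>a<K. \<forall>b<K. \<exists>t' t''.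
        (\<forall>y\<in>{0..1}. (t a b has_real_derivative t' y) (at y within {0..1}) \<and>
                     (t' has_real_derivative t'' y) (at y within {0..1}) \<and>
                     \<bar>t' y\<bar> \<le> 1 \<and> \<bar>t'' y\<bar> \<le> 1)"
    and mn: "m \<le> n" and x: "0 < x"
  define s where "s = supnorm K P"
  define E where "E = exp (- ((1/2048) * x\<^sup>2 * real n ^ 2) / (real m * s / real n + x))"
  let ?Ev = "{w. \<exists>e. (\<forall>i<n. e i < K) \<and> card {i. i < n \<and> e i \<noteq> Z i} \<le> m \<and>
              supnorm K (\<lambda>a b. Xmat n P Z t w e a b - Xmat n P Z t w Z a b) > x}"
  have E0: "0 \<le> E" by (simp add: E_def)
  show "measure_pmf.prob (sbm_pmf n P Z) ?Ev \<le> 6 * real (n choose m) * real K ^ (m + 2) * E"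
  proof (cases "n = 0")
    case True
    have "?Ev = {}"
    proof (rule ccontr)
      assume "?Ev \<noteq> {}"
      then obtain w e where "supnorm K (\<lambda>a b. Xmat n P Z t w e a b - Xmat n P Z t w Z a b) > x" by auto
      then obtain a b where "a < K" "b < K" "\<bar>Xmat n P Z t w e a b - Xmat n P Z t w Z a b\<bar> > x"
        using sn_gt[OF K] by blast
      moreover have "Xmat n P Z t w e a b = Xmat n P Z t w Z a b" by (rule Xmat_cong) (use True in auto)
      ultimately show False using x by simp
    qed
    hence "measure_pmf.prob (sbm_pmf n P Z) ?Ev = 0" by (subst \<open>?Ev = {}\<close>) simp
    moreover have "0 \<le> 6 * real (n choose m) * real K ^ (m + 2) * E" using E0 by simp
    ultimately show ?thesis by linarith
  next
    case False
    hence n: "n > 0" by simp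
    have s0: "0 \<le> s" unfolding s_def using sn_ge[OF K K, of P] by (meson abs_ge_zero order_trans)
    have s1: "s \<le> 1" unfolding s_def by (rule sn_le[OF K]) (use Pc in auto)
    have Q: "0 \<le> Qf P Z p \<and> Qf P Z p \<le> s" if "p \<in> Iset n" for p
    proof -
      have "fst p < n" "snd p < n" using that by (auto simp: Iset_def)
      hence z: "Z (fst p) < K" "Z (snd p) < K" using Zc by auto
      have "0 \<le> Qf P Z p" using Pc z by (simp add: Qf_def)
      moreover have "\<bar>Qf P Z p\<bar> \<le> s" unfolding Qf_def s_def by (rule sn_ge[OF z])
      ultimately show ?thesis by simp
    qed
    define Sets where "Sets = {S. S \<subseteq> {..<n} \<and> card S = m}"
    define J where "J = Sigma Sets (\<lambda>S. PiE S (\<lambda>_. {..<K})) \<times> ({..<K} \<times> {..<K})"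
    define ee where "ee = (\<lambda>(S::nat set) f i. if i \<in> S then f i else Z i)"
    define A where "A = (\<lambda>j. {w. x < \<bar>Xmat n P Z t w (ee (fst (fst j)) (snd (fst j))) (fst (snd j)) (snd (snd j))
                                     - Xmat n P Z t w Z (fst (snd j)) (snd (snd j))\<bar>})"
    have finSets: "finite Sets" unfolding Sets_def by (rule finite_subset[of _ "Pow {..<n}"]) auto
    have finJ: "finite J" unfolding J_def using finSets
      by (intro finite_cartesian_product finite_SigmaI finite_PiE) (auto simp: Sets_def intro: finite_subset)
    have incl: "?Ev \<subseteq> (\<Union>j\<in>J. A j)"
    proof
      fix w assume "w \<in> ?Ev"
      then obtain e where eK: "\<forall>i<n. e i < K" and cD: "card {i. i < n \<and> e i \<noteq> Z i} \<le> m"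
        and sup: "supnorm K (\<lambda>a b. Xmat n P Z t w e a b - Xmat n P Z t w Z a b) > x" by auto
      obtain a b where ab: "a < K" "b < K" "\<bar>Xmat n P Z t w e a b - Xmat n P Z t w Z a b\<bar> > x"
        using sn_gt[OF K sup] by blast
      obtain S where S: "{i. i < n \<and> e i \<noteq> Z i} \<subseteq> S" "S \<subseteq> {..<n}" "card S = m"
        using exists_subset_between[of "{i. i < n \<and> e i \<noteq> Z i}" m "{..<n}"] cD mn by auto
      define f where "f = restrict e S"
      have f: "f \<in> PiE S (\<lambda>_. {..<K})" using S eK by (auto simp: f_def)
      have agree: "ee S f i = e i" if "i < n" for i
        using S that by (auto simp: ee_def f_def)
      have "Xmat n P Z t w (ee S f) a b = Xmat n P Z t w e a b" by (rule Xmat_cong) (rule agree)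
      hence "w \<in> A ((S, f), (a, b))" using ab by (simp add: A_def)
      moreover have "((S, f), (a, b)) \<in> J" using S f ab by (auto simp: J_def Sets_def)
      ultimately show "w \<in> (\<Union>j\<in>J. A j)" by blast
    qed
    have Ab: "measure_pmf.prob (sbm_pmf n P Z) (A j) \<le> 4 * E" if j: "j \<in> J" for j
    proof -
      obtain S f a b where jj: "j = ((S, f), (a, b))" by (metis prod.collapse)
      have S: "S \<subseteq> {..<n}" "card S = m" and ab: "a < K" "b < K"
        using j by (auto simp: jj J_def Sets_def)
      obtain t' t'' where T: "\<forall>y\<in>{0..1}. (t a b has_real_derivative t' y) (at y within {0..1}) \<and>
                     (t' has_real_derivative t'' y) (at y within {0..1}) \<and>
                     \<bar>t' y\<bar> \<le> 1 \<and> \<bar>t'' y\<bar> \<le> 1" using Tc ab by blast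
      have "{i. i < n \<and> ee S f i \<noteq> Z i} \<subseteq> S" by (auto simp: ee_def split: if_splits)
      hence "card {i. i < n \<and> ee S f i \<noteq> Z i} \<le> card S"
        by (rule card_mono[rotated]) (use S in \<open>auto intro: finite_subset\<close>)
      hence cS: "card {i. i < n \<and> ee S f i \<noteq> Z i} \<le> m" using S by simp
      have "measure_pmf.prob (sbm_pmf n P Z) {w. \<bar>Xmat n P Z t w (ee S f) a b - Xmat n P Z t w Z a b\<bar> > x} \<le> 4 * E"
        unfolding E_def by (rule event_bound[where t=t and a=a and b=b and e="ee S f", OF n mn Q s1 s0 cS T x])
      thus ?thesis by (simp add: A_def jj)
    qed
    have cardJ: "card J = (n choose m) * K ^ m * (K * K)"
    proof -
      have "card (Sigma Sets (\<lambda>S. PiE S (\<lambda>_. {..<K}))) = (\<Sum>S\<in>Sets. card (PiE S (\<lambda>_. {..<K})))"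
        using finSets by (intro card_SigmaI) (auto simp: Sets_def intro!: finite_PiE intro: finite_subset)
      also have "\<dots> = (\<Sum>S\<in>Sets. K ^ m)"
      proof (intro sum.cong refl)
        fix S assume "S \<in> Sets"
        hence "finite S" "card S = m" by (auto simp: Sets_def intro: finite_subset)
        thus "card (PiE S (\<lambda>_. {..<K})) = K ^ m" by (simp add: card_PiE)
      qed
      also have "\<dots> = card Sets * K ^ m" by simp
      also have "card Sets = n choose m" unfolding Sets_def using n_subsets[of "{..<n}" m] by simp
      finally show ?thesis by (simp add: J_def card_cartesian_product)
    qed
    have "measure_pmf.prob (sbm_pmf n P Z) ?Ev \<le> measure_pmf.prob (sbm_pmf n P Z) (\<Union>j\<in>J. A j)"
      by (intro measure_pmf.finite_measure_mono incl) auto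
    also have "\<dots> \<le> (\<Sum>j\<in>J. measure_pmf.prob (sbm_pmf n P Z) (A j))"
      by (rule measure_pmf.finite_measure_subadditive_finite[OF finJ]) auto
    also have "\<dots> \<le> (\<Sum>j\<in>J. 4 * E)" by (rule sum_mono) (rule Ab)
    also have "\<dots> = real (card J) * (4 * E)" by simp
    also have "\<dots> = real (n choose m) * real K ^ (m + 2) * (4 * E)"
      by (simp add: cardJ power_add power2_eq_square)
    also have "\<dots> \<le> real (n choose m) * real K ^ (m + 2) * (6 * E)"
      using E0 by (intro mult_left_mono) auto
    also have "\<dots> = 6 * real (n choose m) * real K ^ (m + 2) * E" by simp
    finally show ?thesis .
  qed
qed

end
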